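(* Consider the Lur'e system described in the context, with $x(0)=0$. Suppose there exist vectors $\bar u\in\mathbf{R}^n$, $\bar u\ge0$, and $\bar z\in\mathbf{R}^\ell$, $\bar z>0$, such that $$\gamma_{z,u}\bar u<(I-\gamma_{z,v}\gamma_\psi(\bar z))\bar z\quad\text{(componentwise)}.$$ Then the system is CIBO stable; more precisely, every input $u$ with $\lvert u\rvert_{\mathcal{L}_\infty^n}\le\bar u$ produces $\lvert z\rvert_{\mathcal{L}_\infty^\ell}\le\bar z$ (and bounded output $y$).
   Context: Lur'e system: matrices $A\in\mathbf{R}^{N\times N}$, $B_u\in\mathbf{R}^{N\times n}$, $B_v\in\mathbf{R}^{N\times\ell}$, $C_y\in\mathbf{R}^{m\times N}$, $C_z\in\mathbf{R}^{\ell\times N}$, and $\varphi^*\in\mathbf{R}^\ell$ are given; the dynamics are $\dot x=Ax+B_v v+B_u u$, $y=C_y x$, $z=C_z x$, $v=\psi(z)$ with $\psi_i(z_i)=\sin(\varphi^*_i+z_i)-\sin\varphi^*_i-\cos(\varphi^*_i)z_i$, input $u:[0,\infty)\to\mathbf{R}^n$ measurable. It is assumed that for $i\in\{y,z\}$, $j\in\{u,v\}$ the impulse response $h^{i,j}(t)=C_ie^{At}B_j$ ($t\ge0$) has absolutely integrable entries; the gain matrices $\gamma_{i,j}$ have entries $[\gamma_{i,j}]_{pq}=\int_0^\infty|h^{i,j}_{pq}(\tau)|d\tau$. For $\bar z>0$, $\gamma_\psi(\bar z)$ is the diagonal matrix with $\gamma_{\psi,ii}(\bar z_i)=\sup_{0<|z_i|\le\bar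 z_i}\left|\frac{\sin(\varphi^*_i+z_i)-\sin\varphi^*_i}{z_i}-\cos\varphi^*_i\right|$. The element-wise $\mathcal{L}$-infinity norm $\lvert w\rvert_{\mathcal{L}_\infty^k}$ of $w:[0,\infty)\to\mathbf{R}^k$ has entries $\sup_{t\ge0}|w_i(t)|$. CIBO stability: there exists $\bar u$ such that every input with $\lvert u\rvert_{\mathcal{L}_\infty^n}\le\bar u$ yields finite $\lvert y\rvert_{\mathcal{L}_\infty^m}$. Inequalities are componentwise. *)

theory Defs
  imports "HOL-Analysis.Analysis"
begin

primrec matpow :: "real^'n^'n \<Rightarrow> nat \<Rightarrow> real^'n^'n" where
  "matpow M 0 = mat 1"
| "matpow M (Suc k) = M ** matpow M k"

definition mexp :: "real^'n^'n \<Rightarrow> real^'n^'n" where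
  "mexp M = (\<Sum>k. (1 / fact k) *\<^sub>R matpow M k)"

definition impulse :: "real^'N^'i \<Rightarrow> real^'N^'N \<Rightarrow> real^'j^'N \<Rightarrow> real \<Rightarrow> real^'j^'i" where
  "impulse C A B t = C ** mexp (t *\<^sub>R A) ** B"

definition abs_int_impulse :: "real^'N^'i \<Rightarrow> real^'N^'N \<Rightarrow> real^'j^'N \<Rightarrow> bool" where
  "abs_int_impulse C A B \<longleftrightarrow>
     (\<forall>p q. (\<lambda>t. impulse C A B t $ p $ q) absolutely_integrable_on {0..})"

definition gain :: "real^'N^'i \<Rightarrow> real^'N^'N \<Rightarrow> real^'j^'N \<Rightarrow> real^'j^'i" where
  "gain C A B = (\<chi> p q. integral {0..} (\<lambda>t. \<bar>impulse C A B t $ p $ q\<bar>))"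

definition psi :: "real^'l \<Rightarrow> real^'l \<Rightarrow> real^'l" where
  "psi phi z = (\<chi> i. sin (phi $ i + z $ i) - sin (phi $ i) - cos (phi $ i) * z $ i)"

definition gamma_psi :: "real^'l \<Rightarrow> real^'l \<Rightarrow> real^'l^'l" where
  "gamma_psi phi zb = (\<chi> i j. if i = j then
       Sup {\<bar>(sin (phi $ i + s) - sin (phi $ i)) / s - cos (phi $ i)\<bar> | s. 0 < \<bar>s\<bar> \<and> \<bar>s\<bar> \<le> zb $ i}
     else 0)"

definition vless :: "real^'k \<Rightarrow> real^'k \<Rightarrow> bool" where
  "vless a b \<longleftrightarrow> (\<forall>i. a $ i < b $ i)"

text \<open>Solution of the Lur'e system with x(0)=0 in the Caratheodory (integral) sense:
  x(t) = integral_0^t (A x + B_v psi(C_z x) + B_u u) ds for all t >= 0.\<close>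
definition lure_solution ::
  "real^'N^'N \<Rightarrow> real^'n^'N \<Rightarrow> real^'l^'N \<Rightarrow> real^'N^'l \<Rightarrow> real^'l
   \<Rightarrow> (real \<Rightarrow> real^'n) \<Rightarrow> (real \<Rightarrow> real^'N) \<Rightarrow> bool" where
  "lure_solution A Bu Bv Cz phi u x \<longleftrightarrow>
     (\<forall>t\<ge>0. ((\<lambda>s. A *v x s + Bv *v psi phi (Cz *v x s) + Bu *v u s) has_integral x t) {0..t})"

end

theory Submission
  imports Defs
begin

lemma exp_summ: "summable (\<lambda>n. (x::real) ^ n / fact n)"
  using summable_exp[of x] by (simp add: divide_inverse mult.commute)

lemma matpow_scaleR: "matpow (t *\<^sub>R A) k = (t ^ k) *\<^sub>R matpow A k"
  by (induction k) (auto simp: matrix_scalar_ac scalar_matrix_assoc[symmetric])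

lemma matpow_commute: "matpow A k ** A = A ** matpow A k"
proof (induction k)
  case (Suc k)
  have "matpow A (Suc k) ** A = A ** (matpow A k ** A)" by (simp add: matrix_mul_assoc)
  then show ?case using Suc by simp
qed simp

definition mu :: "real^'n^'n \<Rightarrow> real" where "mu A = (\<Sum>i\<in>UNIV. \<Sum>j\<in>UNIV. \<bar>A$i$j\<bar>)"

lemma mu_nonneg: "0 \<le> mu A" unfolding mu_def by (intro sum_nonneg) auto

lemma row_le_mu: "(\<Sum>l\<in>UNIV. \<bar>A$i$l\<bar>) \<le> mu A"
  unfolding mu_def by (rule member_le_sum) (auto intro: sum_nonneg)

lemma matpow_entry_bound: "\<bar>matpow A k $ i $ j\<bar> \<le> mu A ^ k"
proof (induction k arbitrary: i j)
  case 0
  then show ?case by (simp add: mat_def)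
next
  case (Suc k)
  have "\<bar>matpow A (Suc k) $ i $ j\<bar> = \<bar>\<Sum>l\<in>UNIV. A$i$l * matpow A k $ l $ j\<bar>"
    by (simp add: matrix_matrix_mult_def)
  also have "\<dots> \<le> (\<Sum>l\<in>UNIV. \<bar>A$i$l\<bar> * \<bar>matpow A k $ l $ j\<bar>)"
    by (metis (no_types, lifting) abs_mult sum.cong sum_abs)
  also have "\<dots> \<le> (\<Sum>l\<in>UNIV. \<bar>A$i$l\<bar> * mu A ^ k)"
    by (intro sum_mono mult_left_mono Suc.IH) auto
  also have "\<dots> = (\<Sum>l\<in>UNIV. \<bar>A$i$l\<bar>) * mu A ^ k" by (simp add: sum_distrib_right)
  also have "\<dots> \<le> mu A * mu A ^ k"
    by (intro mult_right_mono row_le_mu) (simp add: mu_nonneg)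
  finally show ?case by simp
qed

lemma norm_le_entries: "norm (M::real^'n^'m) \<le> (\<Sum>i\<in>UNIV. \<Sum>j\<in>UNIV. \<bar>M$i$j\<bar>)"
proof -
  have "norm M \<le> (\<Sum>i\<in>UNIV. norm (M$i))" by (simp add: norm_vec_def L2_set_le_sum)
  also have "\<dots> \<le> (\<Sum>i\<in>UNIV. \<Sum>j\<in>UNIV. \<bar>M$i$j\<bar>)"
    by (intro sum_mono norm_le_l1_cart)
  finally show ?thesis .
qed

lemma matpow_norm_bound: "norm (matpow (A::real^'n^'n) k) \<le> real (CARD('n) * CARD('n)) * mu A ^ k"
proof -
  have "norm (matpow A k) \<le> (\<Sum>i\<in>(UNIV::'n set). \<Sum>j\<in>(UNIV::'n set). mu A ^ k)"
  proof -
    have "(\<Sum>i\<in>UNIV. \<Sum>j\<in>UNIV. \<bar>matpow A k $ i $ j\<bar>) \<le> (\<Sum>i\<in>(UNIV::'n set). \<Sum>j\<in>(UNIV::'n set). mu A ^ k)"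
    proof (rule sum_mono)
      fix i :: 'n
      show "(\<Sum>j\<in>UNIV. \<bar>matpow A k $ i $ j\<bar>) \<le> (\<Sum>j\<in>(UNIV::'n set). mu A ^ k)"
        by (rule sum_mono) (rule matpow_entry_bound)
    qed
    then show ?thesis using norm_le_entries[of "matpow A k"] by linarith
  qed
  then show ?thesis by simp
qed

lemma mexp_summable: "summable (\<lambda>k. (1 / fact k) *\<^sub>R matpow (A::real^'n^'n) k)"
proof (rule summable_comparison_test)
  show "\<exists>N. \<forall>n\<ge>N. norm ((1 / fact n) *\<^sub>R matpow A n) \<le> real (CARD('n) * CARD('n)) * (mu A ^ n / fact n)"
    using matpow_norm_bound[of A] by (auto simp: divide_simps mult.commute)
  show "summable (\<lambda>n. real (CARD('n) * CARD('n)) * (mu A ^ n / fact n))"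
    by (intro summable_mult) (simp add: exp_summ)
qed

lemma mexp_entry: "mexp (A::real^'n^'n) $ i $ j = (\<Sum>k. (1 / fact k) * matpow A k $ i $ j)"
proof -
  have bl: "bounded_linear (\<lambda>X::real^'n^'n. X $ i $ j)"
    using bounded_linear_compose[OF bounded_linear_vec_nth bounded_linear_vec_nth] .
  have "(\<lambda>k. (1 / fact k) *\<^sub>R matpow A k) sums mexp A"
    unfolding mexp_def by (rule summable_sums[OF mexp_summable])
  from bounded_linear.sums[OF bl this] show ?thesis
    by (simp add: sums_unique)
qed

definition Ec :: "real^'n^'n \<Rightarrow> 'n \<Rightarrow> 'n \<Rightarrow> nat \<Rightarrow> real" where
  "Ec A i j k = matpow A k $ i $ j / fact k"

lemma mexp_scaleR_entry: "mexp (t *\<^sub>R A) $ i $ j = (\<Sum>k. Ec A i j k * t ^ k)"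
  unfolding mexp_entry matpow_scaleR Ec_def by (simp add: mult_ac)

lemma Ec_summable: "summable (\<lambda>k. Ec A i j k * y ^ k)"
proof (rule summable_comparison_test)
  show "\<exists>N. \<forall>n\<ge>N. norm (Ec A i j n * y ^ n) \<le> (mu A * \<bar>y\<bar>) ^ n / fact n"
  proof (intro exI allI impI)
    fix n :: nat
    have "norm (Ec A i j n * y ^ n) = \<bar>matpow A n $ i $ j\<bar> * \<bar>y\<bar> ^ n / fact n"
      by (simp add: Ec_def abs_mult power_abs)
    also have "\<dots> \<le> mu A ^ n * \<bar>y\<bar> ^ n / fact n"
      by (intro divide_right_mono mult_right_mono matpow_entry_bound) auto
    finally show "norm (Ec A i j n * y ^ n) \<le> (mu A * \<bar>y\<bar>) ^ n / fact n"
      by (simp add: power_mult_distrib)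
  qed
  show "summable (\<lambda>n. (mu A * \<bar>y\<bar>) ^ n / fact n)" by (simp add: exp_summ)
qed

lemma mexp_deriv:
  "((\<lambda>t. mexp (t *\<^sub>R A) $ i $ j) has_real_derivative (mexp (t *\<^sub>R A) ** A) $ i $ j) (at t)"
proof -
  have d: "((\<lambda>t. \<Sum>k. Ec A i j k * t ^ k) has_real_derivative (\<Sum>k. diffs (Ec A i j) k * t ^ k)) (at t)"
    by (rule termdiffs_strong_converges_everywhere) (rule Ec_summable)
  have "(mexp (t *\<^sub>R A) ** A) $ i $ j = (\<Sum>l\<in>UNIV. (\<Sum>k. Ec A i l k * t ^ k) * A $ l $ j)"
    by (simp add: matrix_matrix_mult_def mexp_scaleR_entry)
  also have "\<dots> = (\<Sum>l\<in>UNIV. (\<Sum>k. Ec A i l k * t ^ k * A $ l $ j))"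
    by (intro sum.cong refl suminf_mult2 Ec_summable)
  also have "\<dots> = (\<Sum>k. \<Sum>l\<in>UNIV. Ec A i l k * t ^ k * A $ l $ j)"
    by (rule suminf_sum[symmetric]) (intro summable_mult2 Ec_summable)
  also have "\<dots> = (\<Sum>k. diffs (Ec A i j) k * t ^ k)"
  proof (rule suminf_cong)
    fix k
    have "(\<Sum>l\<in>UNIV. Ec A i l k * t ^ k * A $ l $ j) = (t ^ k / fact k) * (matpow A k ** A) $ i $ j"
      by (simp add: Ec_def matrix_matrix_mult_def sum_distrib_left mult_ac)
    also have "\<dots> = (t ^ k / fact k) * matpow A (Suc k) $ i $ j"
      by (simp add: matpow_commute)
    also have "\<dots> = diffs (Ec A i j) k * t ^ k"
    proof -
      have "diffs (Ec A i j) k = matpow A (Suc k) $ i $ j / fact k"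
        unfolding diffs_def Ec_def by (simp add: fact_Suc del: of_nat_Suc)
      then show ?thesis by simp
    qed
    finally show "(\<Sum>l\<in>UNIV. Ec A i l k * t ^ k * A $ l $ j) = diffs (Ec A i j) k * t ^ k" .
  qed
  finally show ?thesis using d by (simp add: mexp_scaleR_entry)
qed

lemma mexp_zero_entry: "mexp (0 *\<^sub>R A) $ i $ j = mat 1 $ i $ j"
proof -
  have "mexp (0 *\<^sub>R A) $ i $ j = (\<Sum>k. Ec A i j k * 0 ^ k)" by (rule mexp_scaleR_entry)
  also have "\<dots> = Ec A i j 0" by (rule powser_zero)
  finally show ?thesis by (simp add: Ec_def)
qed

lemma mexp_zero_entry': "mexp (0::real^'n^'n) $ i $ j = mat 1 $ i $ j"
  using mexp_zero_entry[of "0::real^'n^'n"] by simp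

lemma mexp_cont: "continuous_on S (\<lambda>t. mexp (t *\<^sub>R A) $ i $ j)"
  by (rule continuous_at_imp_continuous_on) (metis DERIV_isCont mexp_deriv)

lemma Icc_lmeas: "{a..b::real} \<in> lmeasurable"
  by (metis box_real(2) lmeasurable_cbox)

lemma Icc_sets: "{a..b::real} \<in> sets lebesgue"
  using Icc_lmeas by (simp add: fmeasurableD)

lemma ai_iff: "(f::real\<Rightarrow>real) absolutely_integrable_on {a..b} \<longleftrightarrow> integrable (lebesgue_on {a..b}) f"
  by (simp add: integrable_restrict_space set_integrable_def Icc_sets)

lemma cont_bound:
  fixes k :: "real \<Rightarrow> real"
  assumes "continuous_on {a..b} k"
  obtains B where "B \<ge> 0" "\<And>s. s \<in> {a..b} \<Longrightarrow> \<bar>k s\<bar> \<le> B"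
proof -
  have "bounded (k ` {a..b})"
    by (intro compact_imp_bounded compact_continuous_image assms) auto
  then obtain B where "\<forall>x\<in>k ` {a..b}. \<bar>x\<bar> \<le> B" by (auto simp: bounded_real)
  then show ?thesis using that[of "max B 0"] by force
qed

lemma abs_int_mult_cont:
  fixes k \<phi> :: "real \<Rightarrow> real"
  assumes k: "continuous_on {a..b} k" and p: "\<phi> absolutely_integrable_on {a..b}"
  shows "(\<lambda>s. k s * \<phi> s) absolutely_integrable_on {a..b}"
proof -
  obtain B where B: "B \<ge> 0" "\<And>s. s \<in> {a..b} \<Longrightarrow> \<bar>k s\<bar> \<le> B" using cont_bound[OF k] by blast
  have km: "k \<in> borel_measurable (lebesgue_on {a..b})"
    by (rule continuous_imp_measurable_on_sets_lebesgue[OF k Icc_sets])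
  have pm: "\<phi> \<in> borel_measurable (lebesgue_on {a..b})"
    using p absolutely_integrable_measurable_real[OF Icc_sets] by blast
  have pi: "(\<lambda>s. \<bar>\<phi> s\<bar>) integrable_on {a..b}"
    using p absolutely_integrable_on_def[where f=\<phi> and S="{a..b}"] by simp
  show ?thesis
  proof (rule measurable_bounded_by_integrable_imp_absolutely_integrable[OF _ Icc_sets])
    show "(\<lambda>s. k s * \<phi> s) \<in> borel_measurable (lebesgue_on {a..b})"
      using km pm by measurable
    show "(\<lambda>s. B * \<bar>\<phi> s\<bar>) integrable_on {a..b}"
      using integrable_on_cmult_left[OF pi, of B] by simp
    show "norm (k s * \<phi> s) \<le> B * \<bar>\<phi> s\<bar>" if "s \<in> {a..b}" for s
      using B(2)[OF that] by (simp add: abs_mult mult_right_mono)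
  qed
qed

lemma ibp:
  fixes G g \<phi> :: "real \<Rightarrow> real"
  assumes ab: "a \<le> b"
    and G: "\<And>r. r \<in> {a..b} \<Longrightarrow> (G has_real_derivative g r) (at r within {a..b})"
    and g: "continuous_on {a..b} g"
    and p: "\<phi> absolutely_integrable_on {a..b}"
  shows "integral {a..b} (\<lambda>s. G s * \<phi> s)
       = G b * integral {a..b} \<phi> - integral {a..b} (\<lambda>r. g r * integral {a..r} \<phi>)"
proof -
  let ?I = "{a..b}"
  let ?M = "lebesgue_on {a..b}"
  define F where "F r = integral {a..r} \<phi>" for r
  define f where "f r s = (if s \<le> r then g r * \<phi> s else 0)" for r s
  have Gc: "continuous_on ?I G"
    using G by (meson DERIV_continuous continuous_on_eq_continuous_within)
  have pint: "integrable ?M \<phi>" using p ai_iff by blast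
  have pm[measurable]: "\<phi> \<in> borel_measurable ?M" using pint by blast
  have gm[measurable]: "g \<in> borel_measurable ?M"
    by (rule continuous_imp_measurable_on_sets_lebesgue[OF g Icc_sets])
  obtain B where B: "B \<ge> 0" "\<And>s. s \<in> ?I \<Longrightarrow> \<bar>g s\<bar> \<le> B" using cont_bound[OF g] by blast
  have fm: "finite_measure ?M" by (rule finite_measure_lebesgue_on[OF Icc_lmeas])
  interpret M: finite_measure ?M by (rule fm)
  have idm[measurable]: "(\<lambda>x::real. x) \<in> borel_measurable ?M"
    by (rule continuous_imp_measurable_on_sets_lebesgue[OF continuous_on_id Icc_sets])
  interpret P: pair_sigma_finite ?M ?M ..
  have spM: "space ?M = ?I" by simp
  have fmeas: "case_prod f \<in> borel_measurable (?M \<Otimes>\<^sub>M ?M)"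
    unfolding f_def by measurable
  have domint: "integrable (?M \<Otimes>\<^sub>M ?M) (\<lambda>p. B * \<bar>\<phi> (snd p)\<bar>)"
  proof (rule P.Fubini_integrable)
    show "(\<lambda>p. B * \<bar>\<phi> (snd p)\<bar>) \<in> borel_measurable (?M \<Otimes>\<^sub>M ?M)" by measurable
    show "integrable ?M (\<lambda>x. LINT y|?M. norm (B * \<bar>\<phi> (snd (x, y))\<bar>))"
      by (simp add: M.integrable_const)
    show "AE x in ?M. integrable ?M (\<lambda>y. B * \<bar>\<phi> (snd (x, y))\<bar>)"
      using pint by auto
  qed
  have fint: "integrable (?M \<Otimes>\<^sub>M ?M) (case_prod f)"
  proof (rule Bochner_Integration.integrable_bound[OF domint fmeas])
    show "AE p in ?M \<Otimes>\<^sub>M ?M. norm (case_prod f p) \<le> norm (B * \<bar>\<phi> (snd p)\<bar>)"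
    proof (rule AE_I2)
      fix p assume "p \<in> space (?M \<Otimes>\<^sub>M ?M)"
      then have "fst p \<in> ?I" by (auto simp: space_pair_measure)
      then show "norm (case_prod f p) \<le> norm (B * \<bar>\<phi> (snd p)\<bar>)"
        using B by (auto simp: f_def abs_mult split_beta mult_right_mono)
    qed
  qed
  have fub: "(LINT s|?M. (LINT r|?M. f r s)) = (LINT r|?M. (LINT s|?M. f r s))"
    by (rule P.Fubini_integral[OF fint])
  have Fc: "continuous_on ?I F"
    unfolding F_def by (rule indefinite_integral_continuous_1) (use p set_lebesgue_integral_eq_integral in blast)
  have inner1: "(LINT s|?M. f r s) = g r * F r" if r: "r \<in> ?I" for r
  proof -
    have int: "integrable ?M (\<lambda>s. if s \<le> r then \<phi> s else 0)"
      by (rule Bochner_Integration.integrable_bound[OF pint]) auto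
    have "(LINT s|?M. f r s) = (LINT s|?M. g r * (if s \<le> r then \<phi> s else 0))"
      unfolding f_def by (rule Bochner_Integration.integral_cong) auto
    also have "\<dots> = g r * (LINT s|?M. (if s \<le> r then \<phi> s else 0))"
      by (rule integral_mult_right_zero)
    also have "(LINT s|?M. (if s \<le> r then \<phi> s else 0)) = integral ?I (\<lambda>s. if s \<le> r then \<phi> s else 0)"
      by (rule lebesgue_integral_eq_integral[OF int Icc_sets])
    also have "\<dots> = integral ?I (\<lambda>s. if s \<in> {..r} then \<phi> s else 0)" by simp
    also have "\<dots> = integral ({..r} \<inter> ?I) \<phi>" by (rule integral_restrict_Int)
    also have "{..r} \<inter> ?I = {a..r}" using r by auto
    finally show ?thesis unfolding F_def by simp
  qed
  have inner2: "(LINT r|?M. f r s) = \<phi> s * (G b - G s)" if s: "s \<in> ?I" for s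
  proof -
    have int: "integrable ?M (\<lambda>r. if s \<le> r then g r else 0)"
    proof (rule Bochner_Integration.integrable_bound[OF M.integrable_const[of B]])
      show "(\<lambda>r. if s \<le> r then g r else 0) \<in> borel_measurable ?M" by measurable
      show "AE x in ?M. norm (if s \<le> x then g x else 0) \<le> norm B"
        using B by (intro AE_I2) auto
    qed
    have "(LINT r|?M. f r s) = (LINT r|?M. \<phi> s * (if s \<le> r then g r else 0))"
      unfolding f_def by (rule Bochner_Integration.integral_cong) auto
    also have "\<dots> = \<phi> s * (LINT r|?M. (if s \<le> r then g r else 0))"
      by (rule integral_mult_right_zero)
    also have "(LINT r|?M. (if s \<le> r then g r else 0)) = integral ?I (\<lambda>r. if s \<le> r then g r else 0)"
      by (rule lebesgue_integral_eq_integral[OF int Icc_sets])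
    also have "\<dots> = integral ?I (\<lambda>r. if r \<in> {s..} then g r else 0)" by simp
    also have "\<dots> = integral ({s..} \<inter> ?I) g" by (rule integral_restrict_Int)
    also have "{s..} \<inter> ?I = {s..b}" using s by auto
    also have "integral {s..b} g = G b - G s"
    proof (rule integral_unique, rule fundamental_theorem_of_calculus)
      show "s \<le> b" using s by auto
      show "(G has_vector_derivative g x) (at x within {s..b})" if "x \<in> {s..b}" for x
      proof -
        have "(G has_real_derivative g x) (at x within ?I)" using G that s by auto
        then have "(G has_real_derivative g x) (at x within {s..b})"
          by (rule DERIV_subset) (use s in auto)
        then show ?thesis by (simp add: has_real_derivative_iff_has_vector_derivative)
      qed
    qed
    finally show ?thesis by simp
  qed
  have gF: "(\<lambda>r. g r * F r) absolutely_integrable_on ?I"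
    by (intro absolutely_integrable_continuous_real continuous_intros g Fc)
  have pG: "(\<lambda>s. (G b - G s) * \<phi> s) absolutely_integrable_on ?I"
    by (intro abs_int_mult_cont p continuous_intros Gc)
  have Gp: "(\<lambda>s. G s * \<phi> s) absolutely_integrable_on ?I"
    by (intro abs_int_mult_cont p Gc)
  have "(LINT r|?M. (LINT s|?M. f r s)) = (LINT r|?M. g r * F r)"
    by (rule Bochner_Integration.integral_cong) (auto simp: inner1)
  also have "\<dots> = integral ?I (\<lambda>r. g r * F r)"
    by (rule lebesgue_integral_eq_integral[OF _ Icc_sets]) (use gF ai_iff in blast)
  finally have R: "(LINT r|?M. (LINT s|?M. f r s)) = integral ?I (\<lambda>r. g r * F r)" .
  have "(LINT s|?M. (LINT r|?M. f r s)) = (LINT s|?M. (G b - G s) * \<phi> s)"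
    by (rule Bochner_Integration.integral_cong) (auto simp: inner2 mult.commute)
  also have "\<dots> = integral ?I (\<lambda>s. (G b - G s) * \<phi> s)"
    by (rule lebesgue_integral_eq_integral[OF _ Icc_sets]) (use pG ai_iff in blast)
  also have "\<dots> = integral ?I (\<lambda>s. G b * \<phi> s - G s * \<phi> s)"
    by (simp add: algebra_simps)
  also have "\<dots> = integral ?I (\<lambda>s. G b * \<phi> s) - integral ?I (\<lambda>s. G s * \<phi> s)"
    by (rule integral_diff)
      (use p Gp set_lebesgue_integral_eq_integral integrable_on_cmult_left in \<open>blast+\<close>)
  also have "integral ?I (\<lambda>s. G b * \<phi> s) = G b * integral ?I \<phi>"
    by (rule integral_mult_right)
  finally have L: "(LINT s|?M. (LINT r|?M. f r s)) = G b * integral ?I \<phi> - integral ?I (\<lambda>s. G s * \<phi> s)" .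
  show ?thesis using fub L R unfolding F_def by linarith
qed

lemma reflect_shift: "integral {0..t} (\<lambda>s. k (t - s)) = integral {0..t} (k::real\<Rightarrow>real)"
proof -
  have "integral {0..t} (\<lambda>s. k (t - s)) = integral {-t..-0} (\<lambda>x. k (t - - x))"
    using Henstock_Kurzweil_Integration.integral_reflect_real[of t 0 "\<lambda>s. k (t - s)"] by simp
  also have "\<dots> = integral {-t..0} (k \<circ> (+) t)" by (simp add: o_def)
  also have "\<dots> = integral {-t+t..0+t} k" by (rule integral_shift_Icc_real)
  finally show ?thesis by simp
qed

lemma conv_bound:
  fixes h \<psi> :: "real \<Rightarrow> real"
  assumes t: "0 \<le> t" and hc: "continuous_on UNIV h" and hi: "h absolutely_integrable_on {0..}"
    and pa: "\<psi> absolutely_integrable_on {0..t}" and pb: "\<And>s. s \<in> {0..t} \<Longrightarrow> \<bar>\<psi> s\<bar> \<le> M"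
  shows "\<bar>integral {0..t} (\<lambda>s. h (t - s) * \<psi> s)\<bar> \<le> M * integral {0..} (\<lambda>\<tau>. \<bar>h \<tau>\<bar>)"
proof -
  have M0: "0 \<le> M" using pb[of 0] t by auto
  have hc': "continuous_on {0..t} (\<lambda>s. h (t - s))"
    by (intro continuous_on_compose2[OF hc] continuous_intros) auto
  have i1: "(\<lambda>s. h (t - s) * \<psi> s) integrable_on {0..t}"
    using abs_int_mult_cont[OF hc' pa] set_lebesgue_integral_eq_integral by blast
  have hti: "h absolutely_integrable_on {0..t}"
    by (rule absolutely_integrable_on_subinterval[OF hi]) auto
  have ai0: "(\<lambda>\<tau>. \<bar>h \<tau>\<bar>) integrable_on {0..}"
    using hi absolutely_integrable_on_def[where f=h and S="{0..}"] by simp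
  have ait: "(\<lambda>\<tau>. \<bar>h \<tau>\<bar>) integrable_on {0..t}"
    using hti absolutely_integrable_on_def[where f=h and S="{0..t}"] by simp
  have i2: "(\<lambda>s. \<bar>h (t - s)\<bar> * M) integrable_on {0..t}"
    by (intro integrable_continuous_real continuous_intros continuous_on_compose2[OF hc]) auto
  have "\<bar>integral {0..t} (\<lambda>s. h (t - s) * \<psi> s)\<bar> \<le> integral {0..t} (\<lambda>s. \<bar>h (t - s)\<bar> * M)"
    using integral_norm_bound_integral[OF i1 i2] pb by (auto simp: abs_mult mult_left_mono)
  also have "\<dots> = M * integral {0..t} (\<lambda>s. \<bar>h (t - s)\<bar>)"
    by (simp add: mult.commute)
  also have "integral {0..t} (\<lambda>s. \<bar>h (t - s)\<bar>) = integral {0..t} (\<lambda>\<tau>. \<bar>h \<tau>\<bar>)"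
    using reflect_shift[of t "\<lambda>\<tau>. \<bar>h \<tau>\<bar>"] by simp
  also have "M * \<dots> \<le> M * integral {0..} (\<lambda>\<tau>. \<bar>h \<tau>\<bar>)"
    by (intro mult_left_mono M0 integral_subset_le ait ai0) auto
  finally show ?thesis .
qed

lemma ai_add:
  fixes f g :: "real \<Rightarrow> real"
  shows "f absolutely_integrable_on S \<Longrightarrow> g absolutely_integrable_on S \<Longrightarrow> (\<lambda>x. f x + g x) absolutely_integrable_on S"
  unfolding set_integrable_def scaleR_add_right by (rule Bochner_Integration.integrable_add)

lemma mv_ai:
  fixes M :: "real^'q^'j" and g :: "real \<Rightarrow> real^'q"
  assumes "\<And>q. (\<lambda>s. g s $ q) absolutely_integrable_on S"
  shows "(\<lambda>s. (M *v g s) $ j) absolutely_integrable_on S"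
proof -
  have "(\<lambda>s. \<Sum>q\<in>UNIV. M $ j $ q * g s $ q) absolutely_integrable_on S"
    by (intro absolutely_integrable_sum set_integrable_mult_right assms) auto
  then show ?thesis by (simp add: matrix_vector_mult_def)
qed

lemma int_mult_cont:
  fixes k \<phi> :: "real \<Rightarrow> real"
  assumes "continuous_on {a..b} k" "\<phi> absolutely_integrable_on {a..b}"
  shows "(\<lambda>s. k s * \<phi> s) integrable_on {a..b}"
  using abs_int_mult_cont[OF assms] set_lebesgue_integral_eq_integral by blast

lemma cont_ai: "continuous_on {a..b} (f::real\<Rightarrow>real) \<Longrightarrow> f absolutely_integrable_on {a..b}"
  by (rule absolutely_integrable_continuous_real)

lemma mexp_cont_gen: "continuous_on UNIV (\<lambda>\<tau>. (C ** mexp (\<tau> *\<^sub>R A) ** B) $ i $ q)"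
  unfolding matrix_matrix_mult_def by (simp add: vec_lambda_beta) (intro continuous_intros mexp_cont)

lemma mexpA_cont: "continuous_on UNIV (\<lambda>\<tau>. (mexp (\<tau> *\<^sub>R A) ** A) $ i $ j)"
  unfolding matrix_matrix_mult_def by simp (intro continuous_intros mexp_cont)

lemma impulse_cont: "continuous_on UNIV (\<lambda>\<tau>. impulse C A B \<tau> $ i $ q)"
  unfolding impulse_def by (rule mexp_cont_gen)

lemma sin_lip: "\<bar>sin a - sin b\<bar> \<le> \<bar>a - b\<bar>" for a b :: real
proof -
  have "\<bar>sin a - sin b\<bar> = 2 * \<bar>sin ((a - b) / 2)\<bar> * \<bar>cos ((a + b) / 2)\<bar>"
    by (simp add: sin_diff_sin abs_mult)
  also have "\<dots> \<le> 2 * \<bar>(a - b) / 2\<bar> * 1"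
    by (intro mult_mono abs_sin_x_le_abs_x abs_cos_le_one) auto
  finally show ?thesis by simp
qed

lemma gp_facts:
  fixes a zb :: real
  assumes zb: "0 < zb"
  defines "S \<equiv> {\<bar>(sin (a + s) - sin a) / s - cos a\<bar> | s. 0 < \<bar>s\<bar> \<and> \<bar>s\<bar> \<le> zb}"
  shows "0 \<le> Sup S"
    and "\<And>\<zeta>. \<bar>\<zeta>\<bar> \<le> zb \<Longrightarrow> \<bar>sin (a + \<zeta>) - sin a - cos a * \<zeta>\<bar> \<le> Sup S * \<bar>\<zeta>\<bar>"
proof -
  have bdd: "bdd_above S"
  proof (rule bdd_aboveI)
    fix y assume "y \<in> S"
    then obtain s where s: "0 < \<bar>s\<bar>" and y: "y = \<bar>(sin (a + s) - sin a) / s - cos a\<bar>"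
      unfolding S_def by blast
    have "\<bar>(sin (a + s) - sin a) / s\<bar> \<le> 1"
      using sin_lip[of "a + s" a] s by (simp add: abs_divide divide_le_eq_1)
    then show "y \<le> 2" unfolding y using abs_cos_le_one[of a] by linarith
  qed
  have mem: "\<bar>(sin (a + zb) - sin a) / zb - cos a\<bar> \<in> S" unfolding S_def using zb by auto
  show "0 \<le> Sup S"
    using cSup_upper[OF mem bdd] by (meson abs_ge_zero order_trans)
  show "\<bar>sin (a + \<zeta>) - sin a - cos a * \<zeta>\<bar> \<le> Sup S * \<bar>\<zeta>\<bar>" if z: "\<bar>\<zeta>\<bar> \<le> zb" for \<zeta>
  proof (cases "\<zeta> = 0")
    case True then show ?thesis by simp
  next
    case False
    have m: "\<bar>(sin (a + \<zeta>) - sin a) / \<zeta> - cos a\<bar> \<in> S" unfolding S_def using z False by auto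
    have "\<bar>sin (a + \<zeta>) - sin a - cos a * \<zeta>\<bar> = \<bar>(sin (a + \<zeta>) - sin a) / \<zeta> - cos a\<bar> * \<bar>\<zeta>\<bar>"
      using False by (simp add: abs_mult[symmetric] field_simps)
    also have "\<dots> \<le> Sup S * \<bar>\<zeta>\<bar>"
      by (intro mult_right_mono cSup_upper[OF m bdd]) auto
    finally show ?thesis .
  qed
qed

lemma gp_nonneg: "0 < zb $ q \<Longrightarrow> 0 \<le> gamma_psi phi zb $ q $ q"
  unfolding gamma_psi_def using gp_facts(1) by simp

lemma psi_bound:
  assumes "0 < zb $ q" "\<bar>z $ q\<bar> \<le> zb $ q"
  shows "\<bar>psi phi z $ q\<bar> \<le> gamma_psi phi zb $ q $ q * zb $ q"
proof -
  have "\<bar>psi phi z $ q\<bar> \<le> gamma_psi phi zb $ q $ q * \<bar>z $ q\<bar>"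
    unfolding psi_def gamma_psi_def using gp_facts(2)[OF assms] by simp
  also have "\<dots> \<le> gamma_psi phi zb $ q $ q * zb $ q"
    by (intro mult_left_mono assms gp_nonneg)
  finally show ?thesis .
qed

lemma Ecomp: "continuous_on S (\<lambda>s. mexp ((t - s) *\<^sub>R A) $ i $ j)"
  by (rule continuous_on_compose2[OF mexp_cont[of UNIV] _ subset_UNIV]) (intro continuous_intros)

lemma Dcomp: "continuous_on S (\<lambda>s. (mexp ((t - s) *\<^sub>R A) ** A) $ i $ j)"
  by (rule continuous_on_compose2[OF mexpA_cont _ subset_UNIV]) (intro continuous_intros)

lemma Hcomp: "continuous_on S (\<lambda>s. impulse C A B (t - s) $ i $ j)"
  by (rule continuous_on_compose2[OF impulse_cont _ subset_UNIV]) (intro continuous_intros)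

context
  fixes A :: "real^'N^'N" and Bu :: "real^'n^'N" and Bv :: "real^'l^'N" and Cz :: "real^'N^'l"
    and phi :: "real^'l" and u :: "real \<Rightarrow> real^'n" and x :: "real \<Rightarrow> real^'N" and ubar :: "real^'n"
  assumes um: "u \<in> borel_measurable (restrict_space lborel {0..})"
    and ub: "\<forall>t\<ge>0. \<forall>i. \<bar>u t $ i\<bar> \<le> ubar $ i"
    and sol: "lure_solution A Bu Bv Cz phi u x"
begin

lemma f_hasint: "0 \<le> T \<Longrightarrow> ((\<lambda>s. A *v x s + Bv *v psi phi (Cz *v x s) + Bu *v u s) has_integral x T) {0..T}"
  using sol unfolding lure_solution_def by blast

lemma f_int: "0 \<le> T \<Longrightarrow> (\<lambda>s. A *v x s + Bv *v psi phi (Cz *v x s) + Bu *v u s) integrable_on {0..T}"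
  using f_hasint by blast

lemma x_eq: "0 \<le> t \<Longrightarrow> x t = integral {0..t} (\<lambda>s. A *v x s + Bv *v psi phi (Cz *v x s) + Bu *v u s)"
  using integral_unique[OF f_hasint] by simp

lemma x_cont: "continuous_on {0..T} x"
proof (cases "0 \<le> T")
  case True
  have "continuous_on {0..T} (\<lambda>t. integral {0..t} (\<lambda>s. A *v x s + Bv *v psi phi (Cz *v x s) + Bu *v u s))"
    by (rule indefinite_integral_continuous_1[OF f_int[OF True]])
  then show ?thesis by (rule continuous_on_eq) (auto simp: x_eq)
qed simp

lemma Cx_cont: "continuous_on {0..T} (\<lambda>s. (C *v x s) $ i)"
  by (intro continuous_on_component linear_continuous_on_compose[OF x_cont] matrix_vector_mul_linear)

lemma x_comp_cont: "continuous_on {0..T} (\<lambda>s. x s $ i)"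
  by (intro continuous_on_component x_cont)

lemma v_cont: "continuous_on {0..T} (\<lambda>s. psi phi (Cz *v x s) $ q)"
  unfolding psi_def by simp (intro continuous_intros Cx_cont)

lemma u_ai: "(\<lambda>s. u s $ q) absolutely_integrable_on {0..T}"
proof -
  have "(\<lambda>s. indicator {0..} s *\<^sub>R u s) \<in> borel_measurable lborel"
    using um by (subst (asm) borel_measurable_restrict_space_iff) auto
  then have "(\<lambda>s. indicator {0..} s *\<^sub>R u s) \<in> borel_measurable lebesgue"
    by (rule measurable_completion)
  then have "(\<lambda>s. (indicator {0..} s *\<^sub>R u s) $ q) \<in> borel_measurable lebesgue"
    by (rule measurable_compose[OF _ borel_measurable_nth])
  then have m1: "(\<lambda>s. (indicator {0..} s *\<^sub>R u s) $ q) \<in> borel_measurable (lebesgue_on {0..T})"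
    by (rule measurable_restrict_space1)
  have m2: "(\<lambda>s. u s $ q) \<in> borel_measurable (lebesgue_on {0..T})"
    by (rule measurable_cong[THEN iffD1, OF _ m1]) (auto simp: indicator_def)
  show ?thesis
  proof (rule measurable_bounded_by_integrable_imp_absolutely_integrable[OF m2 Icc_sets])
    show "(\<lambda>s. ubar $ q) integrable_on {0..T}" by (rule integrable_const_ivl)
    show "norm (u s $ q) \<le> ubar $ q" if "s \<in> {0..T}" for s
      using ub that by auto
  qed
qed

lemma w_ai: "(\<lambda>s. (Bv *v psi phi (Cz *v x s) + Bu *v u s) $ j) absolutely_integrable_on {0..T}"
proof -
  have "(\<lambda>s. (Bv *v psi phi (Cz *v x s)) $ j + (Bu *v u s) $ j) absolutely_integrable_on {0..T}"
    by (intro ai_add mv_ai cont_ai v_cont u_ai)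
  then show ?thesis by simp
qed

lemma f_ai: "(\<lambda>s. (A *v x s + Bv *v psi phi (Cz *v x s) + Bu *v u s) $ j) absolutely_integrable_on {0..T}"
proof -
  have "(\<lambda>s. (A *v x s) $ j + (Bv *v psi phi (Cz *v x s) + Bu *v u s) $ j) absolutely_integrable_on {0..T}"
    by (intro ai_add mv_ai cont_ai x_comp_cont w_ai)
  then show ?thesis by (simp add: add.assoc)
qed

lemma x_rep:
  assumes t: "0 \<le> t"
  shows "x t $ i = (\<Sum>j\<in>UNIV. integral {0..t} (\<lambda>s. mexp ((t - s) *\<^sub>R A) $ i $ j * (Bv *v psi phi (Cz *v x s) + Bu *v u s) $ j))"
proof -
  define f where "f s = A *v x s + Bv *v psi phi (Cz *v x s) + Bu *v u s" for s
  define w where "w s = Bv *v psi phi (Cz *v x s) + Bu *v u s" for s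
  define E where "E \<tau> = mexp (\<tau> *\<^sub>R A)" for \<tau>
  define D where "D \<tau> = mexp (\<tau> *\<^sub>R A) ** A" for \<tau>
  have fw: "f s $ j = (A *v x s) $ j + w s $ j" for s j by (simp add: f_def w_def add.assoc)
  have fi: "f integrable_on {0..r}" if "0 \<le> r" for r unfolding f_def using f_int that .
  have xr: "integral {0..r} (\<lambda>s. f s $ j) = x r $ j" if "0 \<le> r" for r j
    using integral_component_eq_cart[OF fi[OF that]] x_eq[OF that] by (simp add: f_def[abs_def])
  have ibpj: "integral {0..t} (\<lambda>s. E (t-s) $ i $ j * f s $ j)
      = mat 1 $ i $ j * x t $ j + integral {0..t} (\<lambda>r. D (t-r) $ i $ j * x r $ j)" for j
  proof -
    have "integral {0..t} (\<lambda>s. E (t-s) $ i $ j * f s $ j)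
      = E (t - t) $ i $ j * integral {0..t} (\<lambda>s. f s $ j)
        - integral {0..t} (\<lambda>r. - D (t-r) $ i $ j * integral {0..r} (\<lambda>s. f s $ j))"
    proof (rule ibp[OF t])
      show "((\<lambda>s. E (t - s) $ i $ j) has_real_derivative - D (t - r) $ i $ j) (at r within {0..t})" for r
      proof -
        have "((\<lambda>s. E (t - s) $ i $ j) has_real_derivative D (t - r) $ i $ j * (-1)) (at r)"
          unfolding E_def D_def
          by (rule DERIV_chain2[OF mexp_deriv]) (auto intro!: derivative_eq_intros)
        then show ?thesis by (simp add: has_field_derivative_at_within)
      qed
      show "continuous_on {0..t} (\<lambda>r. - D (t - r) $ i $ j)"
        unfolding D_def by (intro continuous_intros Dcomp)
      show "(\<lambda>s. f s $ j) absolutely_integrable_on {0..t}"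
        unfolding f_def by (rule f_ai)
    qed
    also have "integral {0..t} (\<lambda>r. - D (t-r) $ i $ j * integral {0..r} (\<lambda>s. f s $ j))
        = integral {0..t} (\<lambda>r. - (D (t-r) $ i $ j * x r $ j))"
      by (rule integral_cong) (simp add: xr)
    also have "\<dots> = - integral {0..t} (\<lambda>r. D (t-r) $ i $ j * x r $ j)"
      by (rule integral_neg)
    finally show ?thesis using xr[OF t] by (simp add: E_def mexp_zero_entry')
  qed
  have iAx: "(\<lambda>s. E (t-s) $ i $ j * (A *v x s) $ j) integrable_on {0..t}" for j
    unfolding E_def by (intro int_mult_cont Ecomp cont_ai continuous_on_component Cx_cont)
  have iw: "(\<lambda>s. E (t-s) $ i $ j * w s $ j) integrable_on {0..t}" for j
    unfolding E_def w_def by (intro int_mult_cont Ecomp w_ai)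
  have iDx: "(\<lambda>s. D (t-s) $ i $ j * x s $ j) integrable_on {0..t}" for j
    unfolding D_def by (intro int_mult_cont Dcomp cont_ai x_comp_cont)
  have split: "integral {0..t} (\<lambda>s. E (t-s) $ i $ j * f s $ j)
      = integral {0..t} (\<lambda>s. E (t-s) $ i $ j * (A *v x s) $ j) + integral {0..t} (\<lambda>s. E (t-s) $ i $ j * w s $ j)" for j
    by (simp add: fw distrib_left integral_add[OF iAx iw])
  have same: "(\<Sum>j\<in>UNIV. integral {0..t} (\<lambda>s. E (t-s) $ i $ j * (A *v x s) $ j))
      = (\<Sum>j\<in>UNIV. integral {0..t} (\<lambda>s. D (t-s) $ i $ j * x s $ j))"
  proof -
    have "(\<Sum>j\<in>UNIV. integral {0..t} (\<lambda>s. E (t-s) $ i $ j * (A *v x s) $ j))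
        = integral {0..t} (\<lambda>s. \<Sum>j\<in>UNIV. E (t-s) $ i $ j * (A *v x s) $ j)"
      by (rule integral_sum[symmetric]) (auto intro: iAx)
    also have "\<dots> = integral {0..t} (\<lambda>s. \<Sum>j\<in>UNIV. D (t-s) $ i $ j * x s $ j)"
    proof (rule integral_cong)
      fix s
      have "(\<Sum>j\<in>UNIV. E (t-s) $ i $ j * (A *v x s) $ j) = (E (t-s) *v (A *v x s)) $ i"
        by (simp add: matrix_vector_mult_def)
      also have "\<dots> = (D (t-s) *v x s) $ i"
        by (simp add: D_def E_def matrix_vector_mul_assoc)
      also have "\<dots> = (\<Sum>j\<in>UNIV. D (t-s) $ i $ j * x s $ j)"
        by (simp add: matrix_vector_mult_def)
      finally show "(\<Sum>j\<in>UNIV. E (t-s) $ i $ j * (A *v x s) $ j) = (\<Sum>j\<in>UNIV. D (t-s) $ i $ j * x s $ j)" .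
    qed
    also have "\<dots> = (\<Sum>j\<in>UNIV. integral {0..t} (\<lambda>s. D (t-s) $ i $ j * x s $ j))"
      by (rule integral_sum) (auto intro: iDx)
    finally show ?thesis .
  qed
  have "(\<Sum>j\<in>UNIV. integral {0..t} (\<lambda>s. E (t-s) $ i $ j * f s $ j))
      = (\<Sum>j\<in>UNIV. mat 1 $ i $ j * x t $ j) + (\<Sum>j\<in>UNIV. integral {0..t} (\<lambda>r. D (t-r) $ i $ j * x r $ j))"
    by (simp add: ibpj sum.distrib)
  also have "(\<Sum>j\<in>UNIV. mat 1 $ i $ j * x t $ j) = (\<Sum>j\<in>UNIV. if i = j then x t $ j else 0)"
    by (intro sum.cong) (auto simp: mat_def)
  also have "\<dots> = x t $ i" by simp
  finally have e1: "(\<Sum>j\<in>UNIV. integral {0..t} (\<lambda>s. E (t-s) $ i $ j * f s $ j))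
      = x t $ i + (\<Sum>j\<in>UNIV. integral {0..t} (\<lambda>r. D (t-r) $ i $ j * x r $ j))" .
  have "(\<Sum>j\<in>UNIV. integral {0..t} (\<lambda>s. E (t-s) $ i $ j * f s $ j))
      = (\<Sum>j\<in>UNIV. integral {0..t} (\<lambda>s. E (t-s) $ i $ j * (A *v x s) $ j))
        + (\<Sum>j\<in>UNIV. integral {0..t} (\<lambda>s. E (t-s) $ i $ j * w s $ j))"
    by (simp add: split sum.distrib)
  with e1 same have "x t $ i = (\<Sum>j\<in>UNIV. integral {0..t} (\<lambda>s. E (t-s) $ i $ j * w s $ j))"
    by linarith
  then show ?thesis by (simp add: E_def w_def)
qed

lemma Cx_rep:
  assumes t: "0 \<le> t"
  shows "(C *v x t) $ i = (\<Sum>q\<in>UNIV. integral {0..t} (\<lambda>s. impulse C A Bv (t - s) $ i $ q * psi phi (Cz *v x s) $ q))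
     + (\<Sum>q\<in>UNIV. integral {0..t} (\<lambda>s. impulse C A Bu (t - s) $ i $ q * u s $ q))"
proof -
  define w where "w s = Bv *v psi phi (Cz *v x s) + Bu *v u s" for s
  define v where "v s = psi phi (Cz *v x s)" for s
  define E where "E \<tau> = mexp (\<tau> *\<^sub>R A)" for \<tau>
  have I1: "(\<lambda>s. C$i$k * E(t-s)$k$j * w s $ j) integrable_on {0..t}" for k j
    unfolding E_def w_def by (intro int_mult_cont continuous_intros Ecomp w_ai)
  have Iv: "(\<lambda>s. impulse C A Bv (t - s) $ i $ q * v s $ q) integrable_on {0..t}" for q
    unfolding v_def by (intro int_mult_cont Hcomp cont_ai v_cont)
  have Iu: "(\<lambda>s. impulse C A Bu (t - s) $ i $ q * u s $ q) integrable_on {0..t}" for q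
    by (intro int_mult_cont Hcomp u_ai)
  have "(C *v x t) $ i = (\<Sum>k\<in>UNIV. C$i$k * x t $ k)"
    by (simp add: matrix_vector_mult_def)
  also have "\<dots> = (\<Sum>k\<in>UNIV. \<Sum>j\<in>UNIV. integral {0..t} (\<lambda>s. C$i$k * E(t-s)$k$j * w s $ j))"
  proof (rule sum.cong[OF refl])
    fix k
    have "C$i$k * x t $ k = C$i$k * (\<Sum>j\<in>UNIV. integral {0..t} (\<lambda>s. E(t-s)$k$j * w s $ j))"
      using x_rep[OF t, of k] by (simp add: E_def w_def)
    also have "\<dots> = (\<Sum>j\<in>UNIV. C$i$k * integral {0..t} (\<lambda>s. E(t-s)$k$j * w s $ j))"
      by (rule sum_distrib_left)
    also have "\<dots> = (\<Sum>j\<in>UNIV. integral {0..t} (\<lambda>s. C$i$k * E(t-s)$k$j * w s $ j))"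
      by (intro sum.cong refl) (simp add: mult.assoc)
    finally show "C$i$k * x t $ k = (\<Sum>j\<in>UNIV. integral {0..t} (\<lambda>s. C$i$k * E(t-s)$k$j * w s $ j))" .
  qed
  also have "\<dots> = (\<Sum>k\<in>UNIV. integral {0..t} (\<lambda>s. \<Sum>j\<in>UNIV. C$i$k * E(t-s)$k$j * w s $ j))"
    by (intro sum.cong refl integral_sum[symmetric]) (auto intro: I1)
  also have "\<dots> = integral {0..t} (\<lambda>s. \<Sum>k\<in>UNIV. \<Sum>j\<in>UNIV. C$i$k * E(t-s)$k$j * w s $ j)"
    by (intro integral_sum[symmetric] integrable_sum) (auto intro: I1)
  also have "\<dots> = integral {0..t} (\<lambda>s. (\<Sum>q\<in>UNIV. impulse C A Bv (t - s) $ i $ q * v s $ q)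
                                      + (\<Sum>q\<in>UNIV. impulse C A Bu (t - s) $ i $ q * u s $ q))"
  proof (rule integral_cong)
    fix s
    have vec: "C *v (E(t-s) *v w s) = impulse C A Bv (t - s) *v v s + impulse C A Bu (t - s) *v u s"
      by (simp add: w_def v_def E_def impulse_def matrix_vector_right_distrib matrix_vector_mul_assoc matrix_mul_assoc)
    have "(\<Sum>k\<in>UNIV. \<Sum>j\<in>UNIV. C$i$k * E(t-s)$k$j * w s $ j) = (C *v (E(t-s) *v w s)) $ i"
      by (simp add: matrix_vector_mult_def sum_distrib_left mult.assoc)
    also have "\<dots> = (\<Sum>q\<in>UNIV. impulse C A Bv (t - s) $ i $ q * v s $ q)
                   + (\<Sum>q\<in>UNIV. impulse C A Bu (t - s) $ i $ q * u s $ q)"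
      unfolding vec by (simp add: matrix_vector_mult_def)
    finally show "(\<Sum>k\<in>UNIV. \<Sum>j\<in>UNIV. C$i$k * E(t-s)$k$j * w s $ j) = \<dots>" .
  qed
  also have "\<dots> = integral {0..t} (\<lambda>s. \<Sum>q\<in>UNIV. impulse C A Bv (t - s) $ i $ q * v s $ q)
                 + integral {0..t} (\<lambda>s. \<Sum>q\<in>UNIV. impulse C A Bu (t - s) $ i $ q * u s $ q)"
    by (intro integral_add integrable_sum) (auto intro: Iv Iu)
  also have "\<dots> = (\<Sum>q\<in>UNIV. integral {0..t} (\<lambda>s. impulse C A Bv (t - s) $ i $ q * v s $ q))
                 + (\<Sum>q\<in>UNIV. integral {0..t} (\<lambda>s. impulse C A Bu (t - s) $ i $ q * u s $ q))"
    by (simp add: integral_sum Iv Iu)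
  finally show ?thesis by (simp add: v_def)
qed

lemma key:
  assumes t: "0 \<le> t" and zb: "\<forall>q. 0 < zbar $ q"
    and zs: "\<forall>s\<in>{0..t}. \<forall>q. \<bar>(Cz *v x s) $ q\<bar> \<le> zbar $ q"
    and iv: "abs_int_impulse C A Bv" and iu: "abs_int_impulse C A Bu"
  shows "\<bar>(C *v x t) $ i\<bar> \<le> (\<Sum>q\<in>UNIV. gain C A Bv $ i $ q * (gamma_psi phi zbar $ q $ q * zbar $ q))
                         + (\<Sum>q\<in>UNIV. gain C A Bu $ i $ q * ubar $ q)"
proof -
  have bv: "\<bar>integral {0..t} (\<lambda>s. impulse C A Bv (t - s) $ i $ q * psi phi (Cz *v x s) $ q)\<bar>
      \<le> gain C A Bv $ i $ q * (gamma_psi phi zbar $ q $ q * zbar $ q)" for q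
  proof -
    have "\<bar>integral {0..t} (\<lambda>s. impulse C A Bv (t - s) $ i $ q * psi phi (Cz *v x s) $ q)\<bar>
      \<le> (gamma_psi phi zbar $ q $ q * zbar $ q) * integral {0..} (\<lambda>\<tau>. \<bar>impulse C A Bv \<tau> $ i $ q\<bar>)"
    proof (rule conv_bound[OF t impulse_cont])
      show "(\<lambda>\<tau>. impulse C A Bv \<tau> $ i $ q) absolutely_integrable_on {0..}"
        using iv unfolding abs_int_impulse_def by blast
      show "(\<lambda>s. psi phi (Cz *v x s) $ q) absolutely_integrable_on {0..t}"
        by (intro cont_ai v_cont)
      show "\<bar>psi phi (Cz *v x s) $ q\<bar> \<le> gamma_psi phi zbar $ q $ q * zbar $ q" if "s \<in> {0..t}" for s
        using psi_bound zb zs that by blast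
    qed
    then show ?thesis by (simp add: gain_def mult.commute)
  qed
  have bu: "\<bar>integral {0..t} (\<lambda>s. impulse C A Bu (t - s) $ i $ q * u s $ q)\<bar>
      \<le> gain C A Bu $ i $ q * ubar $ q" for q
  proof -
    have "\<bar>integral {0..t} (\<lambda>s. impulse C A Bu (t - s) $ i $ q * u s $ q)\<bar>
      \<le> ubar $ q * integral {0..} (\<lambda>\<tau>. \<bar>impulse C A Bu \<tau> $ i $ q\<bar>)"
    proof (rule conv_bound[OF t impulse_cont])
      show "(\<lambda>\<tau>. impulse C A Bu \<tau> $ i $ q) absolutely_integrable_on {0..}"
        using iu unfolding abs_int_impulse_def by blast
      show "(\<lambda>s. u s $ q) absolutely_integrable_on {0..t}" by (rule u_ai)
      show "\<bar>u s $ q\<bar> \<le> ubar $ q" if "s \<in> {0..t}" for s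
        using ub that by auto
    qed
    then show ?thesis by (simp add: gain_def mult.commute)
  qed
  have "\<bar>(C *v x t) $ i\<bar> \<le> \<bar>\<Sum>q\<in>UNIV. integral {0..t} (\<lambda>s. impulse C A Bv (t - s) $ i $ q * psi phi (Cz *v x s) $ q)\<bar>
     + \<bar>\<Sum>q\<in>UNIV. integral {0..t} (\<lambda>s. impulse C A Bu (t - s) $ i $ q * u s $ q)\<bar>"
    unfolding Cx_rep[OF t] by (rule abs_triangle_ineq)
  also have "\<dots> \<le> (\<Sum>q\<in>UNIV. \<bar>integral {0..t} (\<lambda>s. impulse C A Bv (t - s) $ i $ q * psi phi (Cz *v x s) $ q)\<bar>)
     + (\<Sum>q\<in>UNIV. \<bar>integral {0..t} (\<lambda>s. impulse C A Bu (t - s) $ i $ q * u s $ q)\<bar>)"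
    by (intro add_mono sum_abs)
  also have "\<dots> \<le> (\<Sum>q\<in>UNIV. gain C A Bv $ i $ q * (gamma_psi phi zbar $ q $ q * zbar $ q))
                         + (\<Sum>q\<in>UNIV. gain C A Bu $ i $ q * ubar $ q)"
    by (intro add_mono sum_mono bv bu)
  finally show ?thesis .
qed

end


lemma diag_mv: "(gamma_psi phi zb *v zb) $ q = gamma_psi phi zb $ q $ q * zb $ q"
proof -
  have "(gamma_psi phi zb *v zb) $ q = (\<Sum>j\<in>UNIV. gamma_psi phi zb $ q $ j * zb $ j)"
    by (simp add: matrix_vector_mult_def)
  also have "\<dots> = (\<Sum>j\<in>UNIV. if q = j then gamma_psi phi zb $ q $ q * zb $ j else 0)"
    by (intro sum.cong refl) (auto simp: gamma_psi_def)
  finally show ?thesis by simp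
qed

lemma small_gain_comp:
  assumes "vless (G1 *v ub) ((mat 1 - G2 ** gamma_psi phi zb) *v zb)"
  shows "(\<Sum>q\<in>UNIV. G2 $ i $ q * (gamma_psi phi zb $ q $ q * zb $ q)) + (\<Sum>q\<in>UNIV. G1 $ i $ q * ub $ q) < zb $ i"
proof -
  have "(G1 *v ub) $ i < ((mat 1 - G2 ** gamma_psi phi zb) *v zb) $ i"
    using assms unfolding vless_def by blast
  also have "(mat 1 - G2 ** gamma_psi phi zb) *v zb = zb - G2 *v (gamma_psi phi zb *v zb)"
    by (simp add: matrix_vector_mult_diff_rdistrib matrix_vector_mul_assoc)
  finally show ?thesis
    by (simp add: matrix_vector_mult_def[of G1] matrix_vector_mult_def[of G2] diag_mv)
qed

theorem theorem2:
  fixes A :: "real^'N^'N" and Bu :: "real^'n^'N" and Bv :: "real^'l^'N"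
    and Cy :: "real^'N^'m" and Cz :: "real^'N^'l" and phi :: "real^'l"
    and ubar :: "real^'n" and zbar :: "real^'l"
  assumes int_yu: "abs_int_impulse Cy A Bu" and int_yv: "abs_int_impulse Cy A Bv"
    and int_zu: "abs_int_impulse Cz A Bu" and int_zv: "abs_int_impulse Cz A Bv"
    and ubar_nonneg: "\<forall>i. 0 \<le> ubar $ i"
    and zbar_pos: "\<forall>i. 0 < zbar $ i"
    and small_gain: "vless (gain Cz A Bu *v ubar) ((mat 1 - gain Cz A Bv ** gamma_psi phi zbar) *v zbar)"
  shows "\<forall>u x. u \<in> borel_measurable (restrict_space lborel {0..})
           \<and> (\<forall>t\<ge>0. \<forall>i. \<bar>u t $ i\<bar> \<le> ubar $ i)
           \<and> x 0 = 0 \<and> lure_solution A Bu Bv Cz phi u x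
         \<longrightarrow> (\<forall>t\<ge>0. \<forall>i. \<bar>(Cz *v x t) $ i\<bar> \<le> zbar $ i)
           \<and> (\<exists>ybar :: real^'m. \<forall>t\<ge>0. \<forall>i. \<bar>(Cy *v x t) $ i\<bar> \<le> ybar $ i)"
proof (intro allI impI, elim conjE)
  fix u :: "real \<Rightarrow> real^'n" and x :: "real \<Rightarrow> real^'N"
  assume um: "u \<in> borel_measurable (restrict_space lborel {0..})"
    and ub: "\<forall>t\<ge>0. \<forall>i. \<bar>u t $ i\<bar> \<le> ubar $ i"
    and x0: "x 0 = 0" and sol: "lure_solution A Bu Bv Cz phi u x"
  let ?z = "\<lambda>t i. \<bar>(Cz *v x t) $ i\<bar>"
  have zc: "continuous_on {0..T} (\<lambda>t. ?z t i)" for T i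
    by (intro continuous_intros Cx_cont[OF um ub sol])
  have lt: "(\<Sum>q\<in>UNIV. gain Cz A Bv $ i $ q * (gamma_psi phi zbar $ q $ q * zbar $ q))
            + (\<Sum>q\<in>UNIV. gain Cz A Bu $ i $ q * ubar $ q) < zbar $ i" for i
    by (rule small_gain_comp[OF small_gain])
  have Z: "\<forall>t\<ge>0. \<forall>i. ?z t i \<le> zbar $ i"
  proof (rule ccontr)
    assume "\<not> (\<forall>t\<ge>0. \<forall>i. ?z t i \<le> zbar $ i)"
    then obtain t1 i1 where t1: "0 \<le> t1" and ti1: "zbar $ i1 < ?z t1 i1" by (auto simp: not_le)
    define S where "S = {t \<in> {0..t1}. \<exists>i. zbar $ i \<le> ?z t i}"
    have S_eq: "S = (\<Union>i\<in>UNIV. {t \<in> {0..t1}. zbar $ i \<le> ?z t i})" unfolding S_def by auto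
    have clS: "closed S" unfolding S_eq
    proof (rule closed_UN)
      show "\<forall>i\<in>UNIV. closed {t \<in> {0..t1}. zbar $ i \<le> ?z t i}"
        by (intro ballI continuous_on_closed_Collect_le continuous_on_const zc closed_atLeastAtMost)
    qed simp
    have t1S: "t1 \<in> S" unfolding S_def using t1 ti1 less_imp_le by auto
    have bdd: "bdd_below S" unfolding S_def by (rule bdd_belowI[of _ 0]) auto
    define t0 where "t0 = Inf S"
    have t0S: "t0 \<in> S" unfolding t0_def using closed_contains_Inf[OF _ bdd clS] t1S by blast
    have t0r: "0 \<le> t0" "t0 \<le> t1" using t0S unfolding S_def by auto
    have below: "?z s q \<le> zbar $ q" if s: "s \<in> {0..<t0}" for s q
    proof -
      have "s \<notin> S"
      proof
        assume "s \<in> S"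
        then have "t0 \<le> s" unfolding t0_def by (rule cInf_lower[OF _ bdd])
        then show False using s by auto
      qed
      then have "\<not> zbar $ q \<le> ?z s q" using s t0r unfolding S_def by auto
      then show ?thesis by simp
    qed
    have all: "\<forall>s\<in>{0..t0}. \<forall>q. ?z s q \<le> zbar $ q"
    proof (cases "t0 = 0")
      case True
      then show ?thesis using x0 zbar_pos by (auto simp: less_imp_le)
    next
      case False
      then have pos: "0 < t0" using t0r by auto
      define K where "K = (\<Inter>q\<in>UNIV. {s \<in> {0..t0}. ?z s q \<le> zbar $ q})"
      have clK: "closed K" unfolding K_def
        by (intro closed_INT ballI continuous_on_closed_Collect_le continuous_on_const zc closed_atLeastAtMost)
      have "{0..<t0} \<subseteq> K" unfolding K_def using below by auto
      then have "closure {0..<t0} \<subseteq> K" by (rule closure_minimal[OF _ clK])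
      then have "{0..t0} \<subseteq> K" using closure_atLeastLessThan[OF pos] by simp
      then show ?thesis unfolding K_def by auto
    qed
    have "?z t0 i < zbar $ i" for i
      using key[OF um ub sol t0r(1) zbar_pos all int_zv int_zu, of i] lt[of i] by linarith
    moreover obtain i where "zbar $ i \<le> ?z t0 i" using t0S unfolding S_def by blast
    ultimately show False by (meson not_le)
  qed
  have Y: "\<exists>ybar :: real^'m. \<forall>t\<ge>0. \<forall>i. \<bar>(Cy *v x t) $ i\<bar> \<le> ybar $ i"
  proof (intro exI allI impI)
    fix t :: real and i assume t: "0 \<le> t"
    have zs: "\<forall>s\<in>{0..t}. \<forall>q. ?z s q \<le> zbar $ q" using Z by auto
    show "\<bar>(Cy *v x t) $ i\<bar> \<le> (\<chi> i. (\<Sum>q\<in>UNIV. gain Cy A Bv $ i $ q * (gamma_psi phi zbar $ q $ q * zbar $ q))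
                         + (\<Sum>q\<in>UNIV. gain Cy A Bu $ i $ q * ubar $ q)) $ i"
      using key[OF um ub sol t zbar_pos zs int_yv int_yu, of i] by simp
  qed
  show "(\<forall>t\<ge>0. \<forall>i. \<bar>(Cz *v x t) $ i\<bar> \<le> zbar $ i)
           \<and> (\<exists>ybar :: real^'m. \<forall>t\<ge>0. \<forall>i. \<bar>(Cy *v x t) $ i\<bar> \<le> ybar $ i)"
    using Z Y by blast
qed

end
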